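(* Let $S,T$ be left inverse semi-braces, $\sigma:T\to\mathrm{Aut}(S)$ a homomorphism from $(T,\cdot)$ into the automorphism group of the left inverse semi-brace $S$ (write ${}^ua=\sigma(u)(a)$), $\delta:S\to\mathrm{End}(T)$ a map into the endomorphism semigroup of $(T,+)$ (write $u^a=\delta(a)(u)$), and $\mathfrak b:S\times S\to T$ a $\delta$-cocycle such that $$\mathfrak b\left(a\,{}^ub,\lambda_a({}^uc)\right)+(uv)^{\lambda_a({}^uc)}+u\left(\mathfrak b\left({}^{u^{-1}}(a^{-1}),c\right)+(u^{-1})^c\right)=u\left(\mathfrak b(b,c)+v^c\right)$$ for all $a,b,c\in S$ and $u,v\in T$. Then $S\times T$ with $$(a,u)+(b,v)=\left(a+b,\ \mathfrak b(a,b)+u^b+v\right),\qquad (a,u)(b,v)=(a\,{}^ub,\,uv)$$ is a left inverse semi-brace (the asymmetric product of $S$ and $T$ via $\sigma$, $\delta$, $\mathfrak b$).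
   Context: An inverse semigroup is a semigroup $(S,\cdot)$ in which for each $a$ there is a unique $a^{-1}$ with $aa^{-1}a=a$, $a^{-1}aa^{-1}=a^{-1}$. A left inverse semi-brace is a triple $(S,+,\cdot)$ with $(S,+)$ a semigroup, $(S,\cdot)$ an inverse semigroup and $a(b+c)=ab+a(a^{-1}+c)$ for all $a,b,c$; set $\lambda_a(b)=a(a^{-1}+b)$. An automorphism of the left inverse semi-brace $S$ is a bijection preserving both operations. Given semigroups $(S,+)$, $(T,+)$ and a map $\delta:S\to\mathrm{End}(T,+)$ with $u^a=\delta(a)(u)$, a $\delta$-cocycle is a map $\mathfrak b:S\times S\to T$ such that $\mathfrak b(a+b,c)+\mathfrak b(a,b)^c+(u^b)^c+v^c=\mathfrak b(a,b+c)+u^{b+c}+\mathfrak b(b,c)+v^c$ for all $a,b,c\in S$, $u,v\in T$. *)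

theory Defs
  imports Main
begin

definition assoc_op :: "('a \<Rightarrow> 'a \<Rightarrow> 'a) \<Rightarrow> bool" where
  "assoc_op f \<longleftrightarrow> (\<forall>a b c. f (f a b) c = f a (f b c))"

definition inverse_semigroup :: "('a \<Rightarrow> 'a \<Rightarrow> 'a) \<Rightarrow> bool" where
  "inverse_semigroup mul \<longleftrightarrow> assoc_op mul \<and>
     (\<forall>a. \<exists>!b. mul (mul a b) a = a \<and> mul (mul b a) b = b)"

definition inv_sg :: "('a \<Rightarrow> 'a \<Rightarrow> 'a) \<Rightarrow> 'a \<Rightarrow> 'a" where
  "inv_sg mul a = (THE b. mul (mul a b) a = a \<and> mul (mul b a) b = b)"

definition left_inverse_semi_brace :: "('a \<Rightarrow> 'a \<Rightarrow> 'a) \<Rightarrow> ('a \<Rightarrow> 'a \<Rightarrow> 'a) \<Rightarrow> bool" where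
  "left_inverse_semi_brace add mul \<longleftrightarrow> assoc_op add \<and> inverse_semigroup mul \<and>
     (\<forall>a b c. mul a (add b c) = add (mul a b) (mul a (add (inv_sg mul a) c)))"

definition lam :: "('a \<Rightarrow> 'a \<Rightarrow> 'a) \<Rightarrow> ('a \<Rightarrow> 'a \<Rightarrow> 'a) \<Rightarrow> 'a \<Rightarrow> 'a \<Rightarrow> 'a" where
  "lam add mul a b = mul a (add (inv_sg mul a) b)"

definition semi_brace_aut :: "('a \<Rightarrow> 'a \<Rightarrow> 'a) \<Rightarrow> ('a \<Rightarrow> 'a \<Rightarrow> 'a) \<Rightarrow> ('a \<Rightarrow> 'a) \<Rightarrow> bool" where
  "semi_brace_aut add mul f \<longleftrightarrow> bij f \<and>
     (\<forall>a b. f (add a b) = add (f a) (f b)) \<and> (\<forall>a b. f (mul a b) = mul (f a) (f b))"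

definition add_endo :: "('b \<Rightarrow> 'b \<Rightarrow> 'b) \<Rightarrow> ('b \<Rightarrow> 'b) \<Rightarrow> bool" where
  "add_endo add f \<longleftrightarrow> (\<forall>u v. f (add u v) = add (f u) (f v))"

(* delta-cocycle; delta a u stands for u^a *)
definition delta_cocycle ::
  "('a \<Rightarrow> 'a \<Rightarrow> 'a) \<Rightarrow> ('b \<Rightarrow> 'b \<Rightarrow> 'b) \<Rightarrow> ('a \<Rightarrow> 'b \<Rightarrow> 'b) \<Rightarrow> ('a \<Rightarrow> 'a \<Rightarrow> 'b) \<Rightarrow> bool" where
  "delta_cocycle addS addT delta bc \<longleftrightarrow>
     (\<forall>a b c u v.
        addT (addT (addT (bc (addS a b) c) (delta c (bc a b))) (delta c (delta b u))) (delta c v)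
      = addT (addT (addT (bc a (addS b c)) (delta (addS b c) u)) (bc b c)) (delta c v))"

end

theory Submission
  imports Defs
begin

lemma inv_props:
  assumes "inverse_semigroup mul"
  shows "mul (mul a (inv_sg mul a)) a = a \<and> mul (mul (inv_sg mul a) a) (inv_sg mul a) = inv_sg mul a"
proof -
  from assms have "\<exists>!b. mul (mul a b) a = a \<and> mul (mul b a) b = b"
    unfolding inverse_semigroup_def by blast
  then show ?thesis unfolding inv_sg_def by (rule theI')
qed

lemma inv_unique:
  assumes "inverse_semigroup mul" "mul (mul a b) a = a" "mul (mul b a) b = b"
  shows "inv_sg mul a = b"
proof -
  from assms have "\<exists>!b. mul (mul a b) a = a \<and> mul (mul b a) b = b"
    unfolding inverse_semigroup_def by blast
  then show ?thesis unfolding inv_sg_def by (rule the1_equality) (use assms in auto)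
qed

lemma idem_rinv:
  assumes "inverse_semigroup mul"
  shows "mul (mul u (inv_sg mul u)) (mul u (inv_sg mul u)) = mul u (inv_sg mul u)"
    and "mul (mul (inv_sg mul u) u) (mul (inv_sg mul u) u) = mul (inv_sg mul u) u"
proof -
  have A: "\<And>a b c. mul (mul a b) c = mul a (mul b c)" using assms
    unfolding inverse_semigroup_def assoc_op_def by blast
  have P: "mul (mul u (inv_sg mul u)) u = u" "mul (mul (inv_sg mul u) u) (inv_sg mul u) = inv_sg mul u"
    using inv_props[OF assms] by auto
  show "mul (mul u (inv_sg mul u)) (mul u (inv_sg mul u)) = mul u (inv_sg mul u)"
    by (metis A P(1))
  show "mul (mul (inv_sg mul u) u) (mul (inv_sg mul u) u) = mul (inv_sg mul u) u"
    by (metis A P(2))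
qed

lemma bij_idem_id:
  assumes "bij f" "\<And>x. f (f x) = f x"
  shows "f x = x"
  using assms by (metis bij_is_inj injD)

theorem theorem52:
  fixes addS mulS :: "'a \<Rightarrow> 'a \<Rightarrow> 'a"
    and addT mulT :: "'b \<Rightarrow> 'b \<Rightarrow> 'b"
    and sigma :: "'b \<Rightarrow> 'a \<Rightarrow> 'a"
    and delta :: "'a \<Rightarrow> 'b \<Rightarrow> 'b"
    and bc :: "'a \<Rightarrow> 'a \<Rightarrow> 'b"
  assumes S: "left_inverse_semi_brace addS mulS"
    and T: "left_inverse_semi_brace addT mulT"
    and sigma_aut: "\<forall>u. semi_brace_aut addS mulS (sigma u)"
    and sigma_hom: "\<forall>u v. sigma (mulT u v) = sigma u \<circ> sigma v"
    and delta_end: "\<forall>a. add_endo addT (delta a)"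
    and cocycle: "delta_cocycle addS addT delta bc"
    and cond: "\<forall>a b c u v.
       addT (addT (bc (mulS a (sigma u b)) (lam addS mulS a (sigma u c)))
                  (delta (lam addS mulS a (sigma u c)) (mulT u v)))
            (mulT u (addT (bc (sigma (inv_sg mulT u) (inv_sg mulS a)) c)
                          (delta c (inv_sg mulT u))))
       = mulT u (addT (bc b c) (delta c v))"
  shows "left_inverse_semi_brace
           (\<lambda>(a, u) (b, v). (addS a b, addT (addT (bc a b) (delta b u)) v))
           (\<lambda>(a, u) (b, v). (mulS a (sigma u b), mulT u v))"
proof -
  define iS where "iS = inv_sg mulS"
  define iT where "iT = inv_sg mulT"
  have ISS: "inverse_semigroup mulS" and IST: "inverse_semigroup mulT"
    using S T unfolding left_inverse_semi_brace_def by auto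
  have aS: "\<And>a b c. addS (addS a b) c = addS a (addS b c)"
   and mS: "\<And>a b c. mulS (mulS a b) c = mulS a (mulS b c)"
   and dS: "\<And>a b c. mulS a (addS b c) = addS (mulS a b) (mulS a (addS (iS a) c))"
    using S unfolding left_inverse_semi_brace_def inverse_semigroup_def assoc_op_def iS_def by blast+
  have aT: "\<And>a b c. addT (addT a b) c = addT a (addT b c)"
   and mT: "\<And>a b c. mulT (mulT a b) c = mulT a (mulT b c)"
   and dT: "\<And>a b c. mulT a (addT b c) = addT (mulT a b) (mulT a (addT (iT a) c))"
    using T unfolding left_inverse_semi_brace_def inverse_semigroup_def assoc_op_def iT_def by blast+
  have sadd: "\<And>u a b. sigma u (addS a b) = addS (sigma u a) (sigma u b)"
   and smul: "\<And>u a b. sigma u (mulS a b) = mulS (sigma u a) (sigma u b)"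
   and sbij: "\<And>u. bij (sigma u)"
    using sigma_aut unfolding semi_brace_aut_def by blast+
  have shom: "\<And>u v x. sigma (mulT u v) x = sigma u (sigma v x)"
    using sigma_hom by simp
  have dadd: "\<And>a u v. delta a (addT u v) = addT (delta a u) (delta a v)"
    using delta_end unfolding add_endo_def by blast
  have cocy: "\<And>a b c u v. addT (addT (addT (bc (addS a b) c) (delta c (bc a b))) (delta c (delta b u))) (delta c v)
      = addT (addT (addT (bc a (addS b c)) (delta (addS b c) u)) (bc b c)) (delta c v)"
    using cocycle unfolding delta_cocycle_def by blast
  have condd: "\<And>a b c u v.
       addT (addT (bc (mulS a (sigma u b)) (lam addS mulS a (sigma u c)))
                  (delta (lam addS mulS a (sigma u c)) (mulT u v)))
            (mulT u (addT (bc (sigma (iT u) (iS a)) c)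
                          (delta c (iT u))))
       = mulT u (addT (bc b c) (delta c v))"
    using cond unfolding iS_def iT_def by blast
  have PS: "\<And>a. mulS (mulS a (iS a)) a = a" "\<And>a. mulS (mulS (iS a) a) (iS a) = iS a"
    using inv_props[OF ISS] unfolding iS_def by auto
  have PT: "\<And>a. mulT (mulT a (iT a)) a = a" "\<And>a. mulT (mulT (iT a) a) (iT a) = iT a"
    using inv_props[OF IST] unfolding iT_def by auto
  have id1: "\<And>u x. sigma (mulT u (iT u)) x = x"
  proof -
    fix u x
    show "sigma (mulT u (iT u)) x = x"
      apply (rule bij_idem_id[OF sbij])
      using idem_rinv(1)[OF IST, of u] shom unfolding iT_def by metis
  qed
  have id2: "\<And>u x. sigma (mulT (iT u) u) x = x"
  proof -
    fix u x
    show "sigma (mulT (iT u) u) x = x"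
      apply (rule bij_idem_id[OF sbij])
      using idem_rinv(2)[OF IST, of u] shom unfolding iT_def by metis
  qed
  define add where "add = (\<lambda>(a, u) (b, v). (addS a b, addT (addT (bc a b) (delta b u)) v))"
  define mul where "mul = (\<lambda>(a::'a, u::'b) (b, v). (mulS a (sigma u b), mulT u v))"
  have addA: "assoc_op add"
    unfolding assoc_op_def add_def
    by (auto simp: aS dadd) (metis aT cocy)
  have mulA: "assoc_op mul"
    unfolding assoc_op_def mul_def
    by (auto simp: mS mT smul shom)
  have invP: "mul (mul (a,u) (sigma (iT u) (iS a), iT u)) (a,u) = (a,u) \<and>
              mul (mul (sigma (iT u) (iS a), iT u) (a,u)) (sigma (iT u) (iS a), iT u) = (sigma (iT u) (iS a), iT u)"
    for a u
    unfolding mul_def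
    apply (simp add: PT)
    apply (simp add: PT shom[symmetric] id1 id2 smul[symmetric] PS)
    done
  have invU: "(x,w) = (sigma (iT u) (iS a), iT u)"
    if h1: "mul (mul (a,u) (x,w)) (a,u) = (a,u)" and h2: "mul (mul (x,w) (a,u)) (x,w) = (x,w)" for a u x w
  proof -
    from h1 h2 have t1: "mulT (mulT u w) u = u" and t2: "mulT (mulT w u) w = w"
      unfolding mul_def by auto
    have w: "w = iT u" using inv_unique[OF IST t1 t2] unfolding iT_def by simp
    from h1 have s1: "mulS (mulS a (sigma u x)) (sigma (mulT u w) a) = a" unfolding mul_def by auto
    hence s1': "mulS (mulS a (sigma u x)) a = a" using w id1 by simp
    from h2 have "mulS (mulS x (sigma w a)) (sigma (mulT w u) x) = x" unfolding mul_def by auto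
    hence "mulS (mulS x (sigma w a)) x = x" using w id2 by simp
    hence "sigma u (mulS (mulS x (sigma w a)) x) = sigma u x" by simp
    hence s2': "mulS (mulS (sigma u x) a) (sigma u x) = sigma u x"
      by (simp add: smul shom[symmetric] w id1)
    have "iS a = sigma u x" using inv_unique[OF ISS s1' s2'] unfolding iS_def by simp
    hence "sigma (iT u) (iS a) = x" by (simp add: shom[symmetric] w id2)
    thus ?thesis using w by simp
  qed
  have ISP: "inverse_semigroup mul"
    unfolding inverse_semigroup_def
  proof (intro conjI allI mulA)
    fix p :: "'a \<times> 'b"
    obtain a u where p: "p = (a,u)" by (cases p)
    show "\<exists>!q. mul (mul p q) p = p \<and> mul (mul q p) q = q"
      unfolding p using invP invU by (metis surj_pair)
  qed
  have invE: "inv_sg mul (a,u) = (sigma (iT u) (iS a), iT u)" for a u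
    using inv_unique[OF ISP] invP by blast
  have distr: "mul p (add q r) = add (mul p q) (mul p (add (inv_sg mul p) r))" for p q r
  proof -
    obtain a u where p: "p = (a,u)" by (cases p)
    obtain b v where q: "q = (b,v)" by (cases q)
    obtain c w where r: "r = (c,w)" by (cases r)
    have e1: "mulS a (sigma u (addS (sigma (iT u) (iS a)) c)) = lam addS mulS a (sigma u c)"
      unfolding lam_def iS_def[symmetric] by (simp add: sadd shom[symmetric] id1)
    have e2: "mulS a (sigma u (addS b c)) = addS (mulS a (sigma u b)) (lam addS mulS a (sigma u c))"
      unfolding lam_def iS_def[symmetric] sadd by (rule dS)
    have e3: "mulT u (addT (addT (bc b c) (delta c v)) w) =
      addT (addT (bc (mulS a (sigma u b)) (lam addS mulS a (sigma u c)))
                  (delta (lam addS mulS a (sigma u c)) (mulT u v)))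
            (mulT u (addT (addT (bc (sigma (iT u) (iS a)) c) (delta c (iT u))) w))"
      unfolding dT[of u "addT (bc b c) (delta c v)"]
      unfolding dT[of u "addT (bc (sigma (iT u) (iS a)) c) (delta c (iT u))"]
      unfolding aT[symmetric, of _ "mulT u (addT (bc (sigma (iT u) (iS a)) c) (delta c (iT u)))"]
      unfolding condd ..
    show ?thesis unfolding p q r invE
      by (simp add: mul_def add_def e1 e2 e3)
  qed
  show ?thesis
    unfolding left_inverse_semi_brace_def add_def[symmetric] mul_def[symmetric]
    using addA ISP distr by blast
qed

end
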